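(* Let $p\ge 2$ and let $(E_n)$ be a sequence of convex and compact subsets of $\mathbb{R}^p$. Assume that $F_n:=\partial E_n$ converges in the Painlevé–Kuratowski sense to a compact nonempty set $F$. Then $E_n$ converges in the Painlevé–Kuratowski sense to $E:=\mathrm{conv}\,F$, and $\partial E=F$.
   Context: For subsets $A_n$ of $\mathbb{R}^p$, $\liminf A_n$ is the set of limits of sequences $x_n\in A_n$, $\limsup A_n$ is the set of limits of sequences $x_{n_k}\in A_{n_k}$ along some $n_1<n_2<\dots$, and $A_n\to A$ in the Painlevé–Kuratowski sense if $\liminf A_n=\limsup A_n=A$. $\partial$ denotes the topological boundary in $\mathbb{R}^p$ and $\mathrm{conv}$ the convex hull. *)

theory Defs
  imports "HOL-Analysis.Analysis"
begin

definition PK_liminf :: "(nat \<Rightarrow> 'a::metric_space set) \<Rightarrow> 'a set" where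
  "PK_liminf A = {x. \<exists>u. (\<forall>n. u n \<in> A n) \<and> u \<longlonglongrightarrow> x}"

definition PK_limsup :: "(nat \<Rightarrow> 'a::metric_space set) \<Rightarrow> 'a set" where
  "PK_limsup A = {x. \<exists>r u. strict_mono r \<and> (\<forall>k. u k \<in> A (r k)) \<and> u \<longlonglongrightarrow> x}"

definition PK_converges :: "(nat \<Rightarrow> 'a::metric_space set) \<Rightarrow> 'a set \<Rightarrow> bool" where
  "PK_converges A S \<longleftrightarrow> PK_liminf A = S \<and> PK_limsup A = S"

end

theory Submission imports Defs begin


lemma L_liminf:
  fixes A :: "nat \<Rightarrow> 'a::metric_space set"
  assumes ne: "\<And>n. A n \<noteq> {}"
    and ev: "\<And>e. e > 0 \<Longrightarrow> eventually (\<lambda>n. \<exists>w\<in>A n. dist w x < e) sequentially"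
  shows "x \<in> PK_liminf A"
proof -
  have ex: "\<exists>w\<in>A n. dist x w < infdist x (A n) + 1 / (real n + 1)" for n
  proof -
    have "infdist x (A n) < infdist x (A n) + 1 / (real n + 1)" by simp
    then show ?thesis using ne[of n] unfolding infdist_def
      using cInf_lessD[of "dist x ` A n"] by auto
  qed
  then have "\<forall>n. \<exists>w. w \<in> A n \<and> dist x w < infdist x (A n) + 1 / (real n + 1)" by blast
  then obtain u where u0: "\<forall>n. u n \<in> A n \<and> dist x (u n) < infdist x (A n) + 1 / (real n + 1)"
    using choice[of "\<lambda>n w. w \<in> A n \<and> dist x w < infdist x (A n) + 1 / (real n + 1)"] by blast
  then have u: "\<And>n. u n \<in> A n" "\<And>n. dist x (u n) < infdist x (A n) + 1 / (real n + 1)"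
    by auto
  have d0: "(\<lambda>n. infdist x (A n)) \<longlonglongrightarrow> 0"
  proof (rule tendstoI)
    fix e :: real assume "e > 0"
    from ev[OF this] show "eventually (\<lambda>n. dist (infdist x (A n)) 0 < e) sequentially"
    proof (rule eventually_mono)
      fix n assume "\<exists>w\<in>A n. dist w x < e"
      then obtain w where "w \<in> A n" "dist w x < e" by blast
      then have "infdist x (A n) \<le> dist x w" by (simp add: infdist_le)
      then show "dist (infdist x (A n)) 0 < e" using \<open>dist w x < e\<close> infdist_nonneg[of x "A n"]
        by (simp add: dist_commute)
    qed
  qed
  have inv: "(\<lambda>n. 1 / (real n + 1)) \<longlonglongrightarrow> 0"
    using LIMSEQ_inverse_real_of_nat by (simp add: inverse_eq_divide add.commute)
  have "(\<lambda>n. infdist x (A n) + 1 / (real n + 1)) \<longlonglongrightarrow> 0 + 0"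
    by (intro tendsto_add d0 inv)
  then have h0: "(\<lambda>n. infdist x (A n) + 1 / (real n + 1)) \<longlonglongrightarrow> 0" by simp
  have "(\<lambda>n. dist (u n) x) \<longlonglongrightarrow> 0"
  proof (rule tendsto_sandwich[of "\<lambda>n. 0" _ _ "\<lambda>n. infdist x (A n) + 1 / (real n + 1)"])
    show "eventually (\<lambda>n. 0 \<le> dist (u n) x) sequentially" by simp
    show "eventually (\<lambda>n. dist (u n) x \<le> infdist x (A n) + 1 / (real n + 1)) sequentially"
      by (intro always_eventually allI) (simp add: dist_commute less_imp_le[OF u(2)])
  qed (simp_all add: h0)
  then have "u \<longlonglongrightarrow> x" by (rule tendsto_dist_iff[THEN iffD2])
  then show ?thesis unfolding PK_liminf_def using u(1) by (intro CollectI exI[of _ u]) simp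
qed

lemma L_sub:
  assumes "\<not> eventually P sequentially"
  obtains r :: "nat \<Rightarrow> nat" where "strict_mono r" "\<And>k. \<not> P (r k)"
proof -
  have "infinite {n. \<not> P n}"
  proof
    assume "finite {n. \<not> P n}"
    then obtain N where "\<forall>n\<in>{n. \<not> P n}. n < N" by (meson finite_nat_set_iff_bounded)
    then have "\<forall>n\<ge>N. P n" by auto
    then show False using assms unfolding eventually_sequentially by blast
  qed
  then obtain r :: "nat \<Rightarrow> nat" where "strict_mono r" "\<And>n. r n \<in> {n. \<not> P n}"
    using infinite_enumerate by metis
  then show ?thesis using that by blast
qed

lemma L_supp:
  fixes S :: "'a::euclidean_space set"
  assumes "convex S" "closed S" "x \<in> frontier S"
  obtains a where "norm a = 1" "\<And>y. y \<in> S \<Longrightarrow> a \<bullet> x \<le> a \<bullet> y"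
proof -
  have xS: "x \<in> S" using assms frontier_subset_closed by blast
  obtain a where a: "a \<noteq> 0" "\<And>y. y \<in> S \<Longrightarrow> a \<bullet> x \<le> a \<bullet> y"
  proof (cases "interior S = {}")
    case True
    then obtain a b where "a \<noteq> 0" "S \<subseteq> {x. a \<bullet> x = b}"
      using empty_interior_subset_hyperplane assms(1) by metis
    then have "a \<bullet> x \<le> a \<bullet> y" if "y \<in> S" for y
    proof -
      have "a \<bullet> y = b" "a \<bullet> x = b" using \<open>S \<subseteq> _\<close> xS that by auto
      then show ?thesis by simp
    qed
    then show ?thesis using that \<open>a \<noteq> 0\<close> by blast
  next
    case False
    then have "rel_interior S = interior S" by (simp add: rel_interior_nonempty_interior)
    moreover have "x \<notin> interior S" "x \<in> closure S" using assms(3) by (auto simp: frontier_def)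
    ultimately show ?thesis
      using supporting_hyperplane_relative_frontier[OF assms(1), of x] that
      by (metis assms(2) closure_closed)
  qed
  show ?thesis
  proof (rule that[of "a /\<^sub>R norm a"])
    show "norm (a /\<^sub>R norm a) = 1" using a(1) by simp
    fix y assume "y \<in> S"
    then have "a \<bullet> x \<le> a \<bullet> y" by (rule a(2))
    then show "(a /\<^sub>R norm a) \<bullet> x \<le> (a /\<^sub>R norm a) \<bullet> y"
      by (simp, intro mult_left_mono) auto
  qed
qed

lemma L_thick_convex:
  fixes K :: "'a::real_normed_vector set"
  assumes "convex K"
  shows "convex {x. \<exists>k\<in>K. dist x k \<le> e}"
  unfolding convex_def
proof (clarsimp)
  fix x y k1 k2 and u v :: real
  assume h: "k1 \<in> K" "dist x k1 \<le> e" "k2 \<in> K" "dist y k2 \<le> e" "0 \<le> u" "0 \<le> v" "u + v = 1"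
  have "u *\<^sub>R k1 + v *\<^sub>R k2 \<in> K" using assms h unfolding convex_def by blast
  moreover have "dist (u *\<^sub>R x + v *\<^sub>R y) (u *\<^sub>R k1 + v *\<^sub>R k2) \<le> e"
  proof -
    have "dist (u *\<^sub>R x + v *\<^sub>R y) (u *\<^sub>R k1 + v *\<^sub>R k2) = norm (u *\<^sub>R (x - k1) + v *\<^sub>R (y - k2))"
      by (simp add: dist_norm algebra_simps)
    also have "\<dots> \<le> u * norm (x - k1) + v * norm (y - k2)"
      using h by (metis (no_types) abs_of_nonneg norm_scaleR norm_triangle_ineq)
    also have "\<dots> \<le> u * e + v * e"
      using h by (intro add_mono mult_left_mono) (auto simp: dist_norm)
    also have "\<dots> = e" using h by (metis distrib_right mult_1)
    finally show ?thesis .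
  qed
  ultimately show "\<exists>k\<in>K. dist (u *\<^sub>R x + v *\<^sub>R y) k \<le> e" by blast
qed


theorem mainTheorem9:
  fixes E :: "nat \<Rightarrow> 'a::euclidean_space set" and F :: "'a set"
  assumes "DIM('a) \<ge> 2"
    and "\<And>n. convex (E n)" and "\<And>n. compact (E n)"
    and "PK_converges (\<lambda>n. frontier (E n)) F"
    and "compact F" and "F \<noteq> {}"
  shows "PK_converges E (convex hull F) \<and> frontier (convex hull F) = F"
proof -
  define Fr where "Fr = (\<lambda>n. frontier (E n))"
  define K where "K = convex hull F"
  define T where "T = (\<lambda>e. {x. \<exists>k\<in>K. dist x k \<le> e})"
  have liF: "PK_liminf Fr = F" and lsF: "PK_limsup Fr = F"
    using assms(4) unfolding PK_converges_def Fr_def by auto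
  have Kcomp: "compact K" unfolding K_def using assms(5) by (rule compact_convex_hull)
  then have Kcl: "closed K" by (rule compact_imp_closed)
  have Kconv: "convex K" unfolding K_def by simp
  have FK: "F \<subseteq> K" unfolding K_def by (rule hull_subset)
  have Ecl: "closed (E n)" for n using assms(3) by (rule compact_imp_closed)
  have Eeq: "E n = convex hull (Fr n)" for n
    unfolding Fr_def using Krein_Milman_frontier assms(2,3) by blast
  have FrE: "Fr n \<subseteq> E n" for n unfolding Fr_def using Ecl frontier_subset_closed by blast
  obtain x0 where x0: "x0 \<in> F" using assms(6) by blast
  then obtain u0 where u0: "\<And>n. u0 n \<in> Fr n" "u0 \<longlonglongrightarrow> x0"
    using liF unfolding PK_liminf_def by blast
  have ne: "Fr n \<noteq> {}" for n using u0 by blast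
  have conn: "connected (Fr n)" for n
    unfolding Fr_def
    by (rule connected_frontier_simple)
       (auto intro: convex_connected assms(2) connected_complement_bounded_convex assms(1)
             compact_imp_bounded assms(3))
  obtain R0 where R0: "\<And>x. x \<in> F \<Longrightarrow> norm x \<le> R0"
    using compact_imp_bounded[OF assms(5)] unfolding bounded_iff by blast
  define R where "R = R0 + 1"
  have R0pos: "0 \<le> R0" using R0[OF x0] norm_ge_zero[of x0] by linarith
  have bnd: "eventually (\<lambda>n. Fr n \<subseteq> cball 0 R) sequentially"
  proof (rule ccontr)
    assume nev: "\<not> ?thesis"
    have ev: "eventually (\<lambda>n. norm (u0 n) < R) sequentially"
      using order_tendstoD(2)[OF tendsto_norm[OF u0(2)], of R] R0[OF x0] unfolding R_def by simp
    have nev2: "\<not> eventually (\<lambda>n. norm (u0 n) < R \<longrightarrow> Fr n \<subseteq> cball 0 R) sequentially"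
    proof
      assume h: "eventually (\<lambda>n. norm (u0 n) < R \<longrightarrow> Fr n \<subseteq> cball 0 R) sequentially"
      show False using nev eventually_mp[OF h ev] by blast
    qed
    obtain r :: "nat \<Rightarrow> nat" where r0: "strict_mono r" "\<And>k. \<not> (norm (u0 (r k)) < R \<longrightarrow> Fr (r k) \<subseteq> cball 0 R)"
      using L_sub[OF nev2] by blast
    then have r: "strict_mono r" "\<And>k. norm (u0 (r k)) < R" "\<And>k. \<not> Fr (r k) \<subseteq> cball 0 R"
      by auto
    have "\<exists>z. z \<in> Fr (r k) \<and> z \<in> sphere 0 R" for k
    proof -
      have "Fr (r k) \<inter> cball 0 R \<noteq> {}" using u0(1)[of "r k"] r(2)[of k] by auto
      moreover have "Fr (r k) - cball 0 R \<noteq> {}" using r(3)[of k] by blast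
      ultimately have "Fr (r k) \<inter> frontier (cball 0 R) \<noteq> {}"
        using connected_Int_frontier[OF conn] by blast
      then show ?thesis by auto
    qed
    then obtain z where z: "\<And>k. z k \<in> Fr (r k)" "\<And>k. z k \<in> sphere 0 R" by metis
    obtain l s where ls: "l \<in> sphere 0 R" "strict_mono s" "(z \<circ> s) \<longlonglongrightarrow> l"
      using seq_compactE[OF compact_imp_seq_compact[OF compact_sphere], of z] z(2) by blast
    have "l \<in> PK_limsup Fr"
      unfolding PK_limsup_def
      using ls z(1) strict_mono_o[OF r(1) ls(2)] by (auto intro!: exI[of _ "r \<circ> s"] exI[of _ "z \<circ> s"])
    then have "norm l \<le> R0" using lsF R0 by blast
    then show False using ls(1) unfolding R_def by simp
  qed
  have Tconv: "convex (T e)" for e unfolding T_def using Kconv by (rule L_thick_convex)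
  have thick: "eventually (\<lambda>n. E n \<subseteq> T e) sequentially" if e: "e > 0" for e
  proof -
    have "eventually (\<lambda>n. Fr n \<subseteq> T e) sequentially"
    proof (rule ccontr)
      assume nev: "\<not> ?thesis"
      have nev2: "\<not> eventually (\<lambda>n. Fr n \<subseteq> cball 0 R \<longrightarrow> Fr n \<subseteq> T e) sequentially"
      proof
        assume h: "eventually (\<lambda>n. Fr n \<subseteq> cball 0 R \<longrightarrow> Fr n \<subseteq> T e) sequentially"
        show False using nev eventually_mp[OF h bnd] by blast
      qed
      obtain r :: "nat \<Rightarrow> nat" where r0: "strict_mono r" "\<And>k. \<not> (Fr (r k) \<subseteq> cball 0 R \<longrightarrow> Fr (r k) \<subseteq> T e)"
        using L_sub[OF nev2] by blast
      then have r: "strict_mono r" "\<And>k. Fr (r k) \<subseteq> cball 0 R" "\<And>k. \<not> Fr (r k) \<subseteq> T e"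
        by auto
      then have "\<exists>v. v \<in> Fr (r k) \<and> v \<notin> T e" for k by blast
      then obtain v where v: "\<And>k. v k \<in> Fr (r k)" "\<And>k. v k \<notin> T e" by metis
      have vb: "\<forall>k. v k \<in> cball 0 R" using v(1) r(2) by blast
      obtain l s where ls: "l \<in> cball 0 R" "strict_mono s" "(v \<circ> s) \<longlonglongrightarrow> l"
        using seq_compactE[OF compact_imp_seq_compact[OF compact_cball] vb] by blast
      have "l \<in> PK_limsup Fr"
        unfolding PK_limsup_def
        using ls v(1) strict_mono_o[OF r(1) ls(2)] by (auto intro!: exI[of _ "r \<circ> s"] exI[of _ "v \<circ> s"])
      then have lK: "l \<in> K" using lsF FK by blast
      obtain N where "\<And>j. j \<ge> N \<Longrightarrow> dist ((v \<circ> s) j) l < e"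
        using ls(3) e unfolding LIMSEQ_def by blast
      then have "dist (v (s N)) l \<le> e" by fastforce
      then have "v (s N) \<in> T e" unfolding T_def using lK by blast
      then show False using v(2) by blast
    qed
    then show ?thesis
    proof (rule eventually_mono)
      fix n assume "Fr n \<subseteq> T e"
      then show "E n \<subseteq> T e" unfolding Eeq[of n] using Tconv by (rule hull_minimal)
    qed
  qed
  have ls_sub: "PK_limsup E \<subseteq> K"
  proof
    fix x assume "x \<in> PK_limsup E"
    then obtain r u where ru: "strict_mono r" "\<And>k. u k \<in> E (r k)" "u \<longlonglongrightarrow> x"
      unfolding PK_limsup_def by blast
    show "x \<in> K"
    proof (rule ccontr)
      assume "x \<notin> K"
      then obtain e where e: "e > 0" "ball x e \<subseteq> - K"
        using Kcl open_contains_ball[of "- K"] by (auto simp: closed_def)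
      have "eventually (\<lambda>k. E (r k) \<subseteq> T (e/2)) sequentially"
        using eventually_subseq[OF ru(1) thick[of "e/2"]] e by simp
      moreover have "eventually (\<lambda>k. dist (u k) x < e/2) sequentially"
        using tendstoD[OF ru(3), of "e/2"] e(1) by simp
      ultimately have "eventually (\<lambda>k. E (r k) \<subseteq> T (e/2) \<and> dist (u k) x < e/2) sequentially"
        by (rule eventually_conj)
      then obtain N where N: "\<And>k. k \<ge> N \<Longrightarrow> E (r k) \<subseteq> T (e/2) \<and> dist (u k) x < e/2"
        unfolding eventually_sequentially by blast
      then have k: "E (r N) \<subseteq> T (e/2)" "dist (u N) x < e/2" by auto
      define k where "k = N"
      note k = k[folded k_def]
      then obtain y where y: "y \<in> K" "dist (u k) y \<le> e/2" using ru(2)[of k] unfolding T_def by blast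
      then have "dist x y < e" using k(2) dist_triangle[of x y "u k"] by (simp add: dist_commute)
      then show False using e(2) y(1) by auto
    qed
  qed
  have li_conv: "convex (PK_liminf E)"
    unfolding convex_def PK_liminf_def
  proof (clarsimp)
    fix u w x y and a b :: real
    assume h: "\<forall>n. u n \<in> E n" "u \<longlonglongrightarrow> x" "\<forall>n. w n \<in> E n" "w \<longlonglongrightarrow> y" "0 \<le> a" "0 \<le> b" "a + b = 1"
    have "\<forall>n. a *\<^sub>R u n + b *\<^sub>R w n \<in> E n" using h assms(2) unfolding convex_def by blast
    moreover have "(\<lambda>n. a *\<^sub>R u n + b *\<^sub>R w n) \<longlonglongrightarrow> a *\<^sub>R x + b *\<^sub>R y"
      using h by (intro tendsto_intros)
    ultimately show "\<exists>v. (\<forall>n. v n \<in> E n) \<and> v \<longlonglongrightarrow> a *\<^sub>R x + b *\<^sub>R y"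
      by (intro exI[of _ "\<lambda>n. a *\<^sub>R u n + b *\<^sub>R w n"]) simp
  qed
  have F_li: "F \<subseteq> PK_liminf E"
  proof
    fix x assume "x \<in> F"
    then obtain u where u: "\<forall>n. u n \<in> Fr n" "u \<longlonglongrightarrow> x"
      using liF unfolding PK_liminf_def by blast
    then show "x \<in> PK_liminf E" unfolding PK_liminf_def using FrE
      by (intro CollectI exI[of _ u]) auto
  qed
  have K_li: "K \<subseteq> PK_liminf E" unfolding K_def using F_li li_conv by (rule hull_minimal)
  have li_ls: "PK_liminf E \<subseteq> PK_limsup E"
  proof
    fix x assume "x \<in> PK_liminf E"
    then obtain u where u: "\<forall>n. u n \<in> E n" "u \<longlonglongrightarrow> x"
      unfolding PK_liminf_def by blast
    then show "x \<in> PK_limsup E" unfolding PK_limsup_def using strict_mono_id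
      by (intro CollectI exI[of _ id] exI[of _ u]) auto
  qed
  have conv: "PK_converges E K"
    unfolding PK_converges_def using K_li li_ls ls_sub by blast
  have F_front: "F \<subseteq> frontier K"
  proof
    fix x assume xF: "x \<in> F"
    then obtain u where u: "\<And>n. u n \<in> Fr n" "u \<longlonglongrightarrow> x"
      using liF unfolding PK_liminf_def by blast
    have "\<exists>a. a \<in> sphere 0 1 \<and> (\<forall>y\<in>E n. a \<bullet> u n \<le> a \<bullet> y)" for n
    proof -
      have "u n \<in> frontier (E n)" using u(1)[of n] unfolding Fr_def .
      then obtain a where "norm a = 1" "\<And>y. y \<in> E n \<Longrightarrow> a \<bullet> u n \<le> a \<bullet> y"
        using L_supp[OF assms(2)[of n] Ecl[of n]] by blast
      then show ?thesis by auto
    qed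
    then obtain a where a: "\<And>n. a n \<in> sphere 0 1" "\<And>n y. y \<in> E n \<Longrightarrow> a n \<bullet> u n \<le> a n \<bullet> y"
      by metis
    obtain l s where ls: "l \<in> sphere 0 1" "strict_mono s" "(a \<circ> s) \<longlonglongrightarrow> l"
      using seq_compactE[OF compact_imp_seq_compact[OF compact_sphere], of a] a(1) by blast
    have lsupp: "l \<bullet> x \<le> l \<bullet> y" if yK: "y \<in> K" for y
    proof -
      obtain w where w: "\<And>n. w n \<in> E n" "w \<longlonglongrightarrow> y"
        using K_li yK unfolding PK_liminf_def by blast
      have t1: "(\<lambda>k. a (s k) \<bullet> u (s k)) \<longlonglongrightarrow> l \<bullet> x"
        using tendsto_inner[OF ls(3) LIMSEQ_subseq_LIMSEQ[OF u(2) ls(2)]] by (simp add: comp_def)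
      have t2: "(\<lambda>k. a (s k) \<bullet> w (s k)) \<longlonglongrightarrow> l \<bullet> y"
        using tendsto_inner[OF ls(3) LIMSEQ_subseq_LIMSEQ[OF w(2) ls(2)]] by (simp add: comp_def)
      show ?thesis by (rule LIMSEQ_le[OF t1 t2]) (use a(2) w(1) in blast)
    qed
    have xK: "x \<in> K" using xF FK by blast
    have "x \<notin> interior K"
    proof
      assume "x \<in> interior K"
      then obtain e where e: "e > 0" "ball x e \<subseteq> K" using mem_interior by blast
      define y where "y = x - (e/2) *\<^sub>R l"
      have ll: "l \<bullet> l = 1" using ls(1) by (simp add: dot_square_norm)
      have "dist x y < e" unfolding y_def using e(1) ls(1) by (simp add: dist_norm)
      then have "y \<in> K" using e(2) by auto
      then have "l \<bullet> x \<le> l \<bullet> y" by (rule lsupp)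
      moreover have "l \<bullet> y = l \<bullet> x - e/2" unfolding y_def using ll by (simp add: inner_diff_right)
      ultimately show False using e(1) by simp
    qed
    then show "x \<in> frontier K" using xK Kcl by (simp add: frontier_def)
  qed
  have front_F: "frontier K \<subseteq> F"
  proof
    fix x assume xfr: "x \<in> frontier K"
    have "x \<in> PK_liminf Fr"
    proof (rule L_liminf[OF ne])
      fix \<epsilon> :: real assume "\<epsilon> > 0"
      then obtain z where z: "z \<notin> K" "dist x z < \<epsilon>" using xfr frontier_straddle by metis
      then obtain \<eta> where eta: "\<eta> > 0" "ball z \<eta> \<subseteq> - K"
        using Kcl open_contains_ball[of "- K"] by (auto simp: closed_def)
      have xK: "x \<in> K" using xfr Kcl frontier_subset_closed by blast
      then obtain y where y: "\<And>n. y n \<in> E n" "y \<longlonglongrightarrow> x"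
        using K_li unfolding PK_liminf_def by blast
      have "eventually (\<lambda>n. E n \<subseteq> T (\<eta>/2) \<and> dist (y n) x < \<epsilon>) sequentially"
        using thick[of "\<eta>/2"] eta(1) tendstoD[OF y(2) \<open>\<epsilon> > 0\<close>] by (simp add: eventually_conj)
      then show "eventually (\<lambda>n. \<exists>w\<in>Fr n. dist w x < \<epsilon>) sequentially"
      proof (rule eventually_mono)
        fix n assume h: "E n \<subseteq> T (\<eta>/2) \<and> dist (y n) x < \<epsilon>"
        have zE: "z \<notin> E n"
        proof
          assume "z \<in> E n"
          then obtain k where "k \<in> K" "dist z k \<le> \<eta>/2" using h unfolding T_def by blast
          then have "k \<in> ball z \<eta>" using eta(1) by simp
          then show False using eta(2) \<open>k \<in> K\<close> by blast
        qed
        have "closed_segment (y n) z \<inter> E n \<noteq> {}" using y(1)[of n] by auto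
        moreover have "closed_segment (y n) z - E n \<noteq> {}" using zE by auto
        ultimately have "closed_segment (y n) z \<inter> frontier (E n) \<noteq> {}"
          using connected_Int_frontier[OF connected_segment] by blast
        then obtain w where w: "w \<in> closed_segment (y n) z" "w \<in> Fr n" unfolding Fr_def by blast
        have "closed_segment (y n) z \<subseteq> ball x \<epsilon>"
          using h z(2) by (intro closed_segment_subset) (auto simp: dist_commute)
        then have "dist w x < \<epsilon>" using w(1) by (auto simp: dist_commute)
        then show "\<exists>w\<in>Fr n. dist w x < \<epsilon>" using w(2) by blast
      qed
    qed
    then show "x \<in> F" using liF by simp
  qed
  show ?thesis using conv F_front front_F unfolding K_def by blast
qed

end
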